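(* Let $\mathbf f:\mathcal Z\to\mathcal X$ be a $C^2$-diffeomorphism ($\mathcal Z=\mathbb R^{d_z}$, $\mathcal X=\mathbf f(\mathcal Z)\subseteq\mathbb R^{d_x}$). If $\mathbf f$ is additive and sufficiently nonlinear, then $\mathbf f$ has at most first-order interactions across slots, satisfies sufficient independence of order 1, and satisfies interaction asymmetry of order 1 for all equivalent generators.
   Context: Fix a partition $\{B_1,\dots,B_K\}$ of $[d_z]$ into nonempty slots; $\mathbf z_S=(z_i)_{i\in S}$; $D_i\mathbf f(\mathbf z),D^2_{i,i'}\mathbf f(\mathbf z)\in\mathbb R^{d_x}$ are column vectors and $[\cdot]$ is horizontal concatenation. Additive: $\mathbf f(\mathbf z)=\sum_{k=1}^K\mathbf f^k(\mathbf z_{B_k})$ for some $\mathbf f^k:\mathbb R^{|B_k|}\to\mathbb R^{d_x}$ and all $\mathbf z$. Sufficiently nonlinear: with $B^2_{k\le}:=\{(i,i')\in B_k^2:i'\le i\}$, for every $\mathbf z$ the matrix $\mathbf W(\mathbf z):=[[D_i\mathbf f(\mathbf z)]_{i\in B_k}\,[D^2_{i,i'}\mathbf f(\mathbf z)]_{(i,i')\in B^2_{k\le}}]_{k\in[K]}$ has full column rank. At most first-order interaction between $\mathbf z_A,\mathbf z_B$: $D^2_{i,j}\mathbf f(\mathbf z)=\mathbf 0$ for all $\mathbf z$, $i\in A$, $j\in B$; if this fails at some $\mathbf z$, they have second-order interaction at $\mathbf z$. At most first-order interactions across slots: all pairs of distinct slots have at most first-order interaction. Sufficient independence of order 1: for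 all $\mathbf z$, $\mathrm{rank}\big([[D_i\mathbf f(\mathbf z)]_{i\in B_k}\,[D^2_{i,i'}\mathbf f(\mathbf z)]_{(i,i')\in B_k^2}]_{k\in[K]}\big)=\sum_k\big[\mathrm{rank}([D_i\mathbf f(\mathbf z)]_{i\in B_k})+\mathrm{rank}([D^2_{i,i'}\mathbf f(\mathbf z)]_{(i,i')\in B_k^2})\big]$. Interaction asymmetry of order 1: (i) at most first-order interactions across slots on $\mathbb R^{d_z}$; (ii) for every $\mathbf z$, every $k$, and all nonempty $A,B$ with $A\cup B=B_k$, $\mathbf z_A,\mathbf z_B$ have second-order interaction at $\mathbf z$. Equivalent generator: $\bar{\mathbf f}$ with $\bar{\mathbf f}(\mathbf M_1\mathbf z_{B_1},\dots,\mathbf M_K\mathbf z_{B_K})=\mathbf f(\mathbf z)$ for all $\mathbf z$ and some invertible $\mathbf M_k\in\mathbb R^{|B_k|\times|B_k|}$; "for all equivalent generators" means every such $\bar{\mathbf f}$ satisfies interaction asymmetry of order 1. *)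

theory Defs
  imports "HOL-Analysis.Analysis"
begin

text \<open>Latent space R^{d_z} is real^'z, observation space R^{d_x} is real^'x.
  Slots are indexed by a finite type 'k; B k is the slot B_k.\<close>

definition slot_partition :: "('k::finite \<Rightarrow> 'z::finite set) \<Rightarrow> bool" where
  "slot_partition B \<longleftrightarrow> (\<forall>k. B k \<noteq> {}) \<and> (\<forall>k k'. k \<noteq> k' \<longrightarrow> B k \<inter> B k' = {})
      \<and> (\<Union>k. B k) = UNIV"

definition pd :: "(real^'z::finite \<Rightarrow> real^'x::finite) \<Rightarrow> 'z \<Rightarrow> real^'z \<Rightarrow> real^'x" where
  "pd f i z = frechet_derivative f (at z) (axis i 1)"

definition pd2 :: "(real^'z::finite \<Rightarrow> real^'x::finite) \<Rightarrow> 'z \<Rightarrow> 'z \<Rightarrow> real^'z \<Rightarrow> real^'x" where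
  "pd2 f i j z = pd (\<lambda>w. pd f j w) i z"

definition C2 :: "(real^'z::finite \<Rightarrow> real^'x::finite) \<Rightarrow> bool" where
  "C2 f \<longleftrightarrow> (\<forall>z. f differentiable (at z)) \<and> (\<forall>i z. (pd f i) differentiable (at z))
      \<and> (\<forall>i j. continuous_on UNIV (pd2 f i j))"

text \<open>C^2-diffeomorphism of R^{d_z} onto its image X = f(R^{d_z}) \<subseteq> R^{d_x}:
  a C^2 injective immersion that is a homeomorphism onto its image.\<close>
definition C2_diffeo :: "(real^'z::finite \<Rightarrow> real^'x::finite) \<Rightarrow> bool" where
  "C2_diffeo f \<longleftrightarrow> C2 f \<and> inj f \<and> continuous_on (range f) (inv f)
      \<and> (\<forall>z. inj (frechet_derivative f (at z)))"

definition additive :: "('k::finite \<Rightarrow> 'z::finite set) \<Rightarrow> (real^'z \<Rightarrow> real^'x::finite) \<Rightarrow> bool" where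
  "additive B f \<longleftrightarrow> (\<exists>g :: 'k \<Rightarrow> real^'z \<Rightarrow> real^'x.
      (\<forall>k z z'. (\<forall>i\<in>B k. z $ i = z' $ i) \<longrightarrow> g k z = g k z')
      \<and> (\<forall>z. f z = (\<Sum>k\<in>UNIV. g k z)))"

definition col_rank :: "('j \<Rightarrow> real^'x::finite) \<Rightarrow> 'j set \<Rightarrow> nat" where
  "col_rank c J = dim (span (c ` J))"

definition W_cols :: "(real^'z::finite \<Rightarrow> real^'x::finite) \<Rightarrow> real^'z \<Rightarrow> ('z + 'z \<times> 'z) \<Rightarrow> real^'x" where
  "W_cols f z c = (case c of Inl i \<Rightarrow> pd f i z | Inr (i, i') \<Rightarrow> pd2 f i i' z)"

definition W_index :: "('k::finite \<Rightarrow> 'z::{finite,linorder} set) \<Rightarrow> ('z + 'z \<times> 'z) set" where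
  "W_index B = (\<Union>k. Inl ` B k \<union> Inr ` {(i, i'). i \<in> B k \<and> i' \<in> B k \<and> i' \<le> i})"

definition suff_nonlinear :: "('k::finite \<Rightarrow> 'z::{finite,linorder} set) \<Rightarrow> (real^('z::{finite,linorder}) \<Rightarrow> real^'x::finite) \<Rightarrow> bool" where
  "suff_nonlinear B f \<longleftrightarrow> (\<forall>z. col_rank (W_cols f z) (W_index B) = card (W_index B))"

definition at_most_first_order :: "(real^'z::finite \<Rightarrow> real^'x::finite) \<Rightarrow> 'z set \<Rightarrow> 'z set \<Rightarrow> bool" where
  "at_most_first_order f A B' \<longleftrightarrow> (\<forall>z. \<forall>i\<in>A. \<forall>j\<in>B'. pd2 f i j z = 0)"

definition second_order_at :: "(real^'z::finite \<Rightarrow> real^'x::finite) \<Rightarrow> 'z set \<Rightarrow> 'z set \<Rightarrow> real^'z \<Rightarrow> bool" where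
  "second_order_at f A B' z \<longleftrightarrow> (\<exists>i\<in>A. \<exists>j\<in>B'. pd2 f i j z \<noteq> 0)"

definition first_order_across_slots :: "('k::finite \<Rightarrow> 'z::finite set) \<Rightarrow> (real^'z \<Rightarrow> real^'x::finite) \<Rightarrow> bool" where
  "first_order_across_slots B f \<longleftrightarrow> (\<forall>k k'. k \<noteq> k' \<longrightarrow> at_most_first_order f (B k) (B k'))"

definition suff_independent :: "('k::finite \<Rightarrow> 'z::finite set) \<Rightarrow> (real^'z \<Rightarrow> real^'x::finite) \<Rightarrow> bool" where
  "suff_independent B f \<longleftrightarrow> (\<forall>z.
      col_rank (W_cols f z) (\<Union>k. Inl ` B k \<union> Inr ` (B k \<times> B k))
      = (\<Sum>k\<in>UNIV. col_rank (\<lambda>i. pd f i z) (B k)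
                   + col_rank (\<lambda>(i, i'). pd2 f i i' z) (B k \<times> B k)))"

definition interaction_asym :: "('k::finite \<Rightarrow> 'z::finite set) \<Rightarrow> (real^'z \<Rightarrow> real^'x::finite) \<Rightarrow> bool" where
  "interaction_asym B f \<longleftrightarrow> first_order_across_slots B f
     \<and> (\<forall>z k A B'. A \<noteq> {} \<and> B' \<noteq> {} \<and> A \<union> B' = B k \<longrightarrow> second_order_at f A B' z)"

definition block_diag :: "('k::finite \<Rightarrow> 'z::finite set) \<Rightarrow> real^'z^'z \<Rightarrow> bool" where
  "block_diag B M \<longleftrightarrow> (\<forall>i j. (\<not> (\<exists>k. i \<in> B k \<and> j \<in> B k)) \<longrightarrow> M $ i $ j = 0)"

end

theory Submission
  imports Defs
begin



lemma pd_line: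
  fixes g :: "real^'z::finite \<Rightarrow> real^'x::finite"
  assumes "\<forall>w. g differentiable (at w)"
  shows "((\<lambda>s. g (q + s *\<^sub>R axis i 1) $ c) has_real_derivative (pd g i (q + s *\<^sub>R axis i 1) $ c)) (at s)"
proof -
  define p where "p = q + s *\<^sub>R axis i 1"
  define D where "D = frechet_derivative g (at p)"
  have gD: "(g has_derivative D) (at p)" using assms frechet_derivative_works D_def by blast
  have lin: "linear D" using gD has_derivative_linear by blast
  have l: "((\<lambda>s. q + s *\<^sub>R axis i 1) has_derivative (\<lambda>h. h *\<^sub>R axis i 1)) (at s)"
    by (auto intro!: derivative_eq_intros)
  have "((\<lambda>s. g (q + s *\<^sub>R axis i 1)) has_derivative (\<lambda>h. D (h *\<^sub>R axis i 1))) (at s)"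
    using has_derivative_compose[OF l] gD p_def by blast
  then have "((\<lambda>s. g (q + s *\<^sub>R axis i 1) $ c) has_derivative (\<lambda>h. D (h *\<^sub>R axis i 1) $ c)) (at s)"
    using bounded_linear.has_derivative[OF bounded_linear_vec_nth] by blast
  moreover have "(\<lambda>h. D (h *\<^sub>R axis i 1) $ c) = (\<lambda>h. (pd g i p $ c) * h)"
    using lin by (auto simp: pd_def D_def[symmetric] linear_scale)
  ultimately show ?thesis by (simp add: has_field_derivative_def p_def)
qed


lemma mixed_mvt:
  fixes f :: "real^'z::finite \<Rightarrow> real^'x::finite"
  assumes d1: "\<forall>w. f differentiable (at w)" and d2: "\<forall>k w. pd f k differentiable (at w)"
    and t: "t > 0"
  shows "\<exists>\<sigma> \<tau>. 0 < \<sigma> \<and> \<sigma> < t \<and> 0 < \<tau> \<and> \<tau> < t \<and>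
     f (z + t *\<^sub>R axis i 1 + t *\<^sub>R axis j 1) $ c - f (z + t *\<^sub>R axis i 1) $ c
       - f (z + t *\<^sub>R axis j 1) $ c + f z $ c
     = t * t * (pd2 f j i (z + \<sigma> *\<^sub>R axis i 1 + \<tau> *\<^sub>R axis j 1) $ c)"
proof -
  define a where "a = (axis i 1 :: real^'z)"
  define b where "b = (axis j 1 :: real^'z)"
  define u where "u = (\<lambda>s. f ((z + t *\<^sub>R b) + s *\<^sub>R a) $ c - f (z + s *\<^sub>R a) $ c)"
  define u' where "u' = (\<lambda>s. pd f i ((z + t *\<^sub>R b) + s *\<^sub>R a) $ c - pd f i (z + s *\<^sub>R a) $ c)"
  have "\<And>s. (u has_real_derivative u' s) (at s)"
    unfolding u_def u'_def a_def
    by (intro DERIV_diff pd_line d1)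
  then obtain \<sigma> where s: "0 < \<sigma>" "\<sigma> < t" and us: "u t - u 0 = (t - 0) * u' \<sigma>"
    using MVT2[OF t, of u u'] by blast
  define v where "v = (\<lambda>r. pd f i ((z + \<sigma> *\<^sub>R a) + r *\<^sub>R b) $ c)"
  have d3: "\<forall>w. pd f i differentiable (at w)" using d2 by blast
  have "\<And>r. (v has_real_derivative pd (pd f i) j ((z + \<sigma> *\<^sub>R a) + r *\<^sub>R b) $ c) (at r)"
    unfolding v_def b_def by (rule pd_line[OF d3])
  then obtain \<tau> where r: "0 < \<tau>" "\<tau> < t" and vs: "v t - v 0 = (t - 0) * (pd (pd f i) j ((z + \<sigma> *\<^sub>R a) + \<tau> *\<^sub>R b) $ c)"
    using MVT2[OF t, of v "\<lambda>r. pd (pd f i) j ((z + \<sigma> *\<^sub>R a) + r *\<^sub>R b) $ c"] by blast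
  have "u' \<sigma> = v t - v 0" unfolding u'_def v_def by (simp add: algebra_simps)
  then have "u t - u 0 = t * t * (pd2 f j i (z + \<sigma> *\<^sub>R a + \<tau> *\<^sub>R b) $ c)"
    using us vs by (simp add: pd2_def)
  moreover have "u t - u 0 = f (z + t *\<^sub>R a + t *\<^sub>R b) $ c - f (z + t *\<^sub>R a) $ c
       - f (z + t *\<^sub>R b) $ c + f z $ c" unfolding u_def by (simp add: algebra_simps)
  ultimately show ?thesis using s r unfolding a_def b_def by metis
qed


lemma norm_two_axis:
  fixes z :: "real^'z::finite"
  assumes "0 < s" "s < t" "0 < r" "r < t"
  shows "dist (z + s *\<^sub>R axis i 1 + r *\<^sub>R axis j 1) z < 2 * t"
proof -
  have "dist (z + s *\<^sub>R axis i 1 + r *\<^sub>R axis j 1) z = norm (s *\<^sub>R axis i (1::real) + r *\<^sub>R axis j 1)"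
    by (simp add: dist_norm)
  also have "\<dots> \<le> norm (s *\<^sub>R axis i (1::real)) + norm (r *\<^sub>R axis j (1::real))" by (rule norm_triangle_ineq)
  also have "\<dots> = s + r" using assms by simp
  finally show ?thesis using assms by simp
qed

lemma schwarz:
  fixes f :: "real^'z::finite \<Rightarrow> real^'x::finite"
  assumes d1: "\<forall>w. f differentiable (at w)" and d2: "\<forall>k w. pd f k differentiable (at w)"
    and c1: "continuous_on UNIV (pd2 f i j)" and c2: "continuous_on UNIV (pd2 f j i)"
  shows "pd2 f i j z = pd2 f j i z"
proof (subst vec_eq_iff, rule allI, rule ccontr)
  fix c
  assume ne: "pd2 f i j z $ c \<noteq> pd2 f j i z $ c"
  define e where "e = \<bar>pd2 f i j z $ c - pd2 f j i z $ c\<bar>"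
  have e: "e > 0" using ne e_def by simp
  obtain d1' where d1': "d1' > 0" "\<And>w. dist w z < d1' \<Longrightarrow> dist (pd2 f i j w) (pd2 f i j z) < e/2"
    using c1 e unfolding continuous_on_iff by (metis UNIV_I half_gt_zero)
  obtain d2' where d2': "d2' > 0" "\<And>w. dist w z < d2' \<Longrightarrow> dist (pd2 f j i w) (pd2 f j i z) < e/2"
    using c2 e unfolding continuous_on_iff by (metis UNIV_I half_gt_zero)
  define t where "t = min d1' d2' / 3"
  have t: "t > 0" using d1' d2' t_def by simp
  obtain \<sigma> \<tau> where st: "0 < \<sigma>" "\<sigma> < t" "0 < \<tau>" "\<tau> < t" and eq1:
     "f (z + t *\<^sub>R axis i 1 + t *\<^sub>R axis j 1) $ c - f (z + t *\<^sub>R axis i 1) $ c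
       - f (z + t *\<^sub>R axis j 1) $ c + f z $ c
     = t * t * (pd2 f j i (z + \<sigma> *\<^sub>R axis i 1 + \<tau> *\<^sub>R axis j 1) $ c)"
    using mixed_mvt[OF d1 d2 t] by blast
  obtain \<sigma>' \<tau>' where st': "0 < \<sigma>'" "\<sigma>' < t" "0 < \<tau>'" "\<tau>' < t" and eq2:
     "f (z + t *\<^sub>R axis j 1 + t *\<^sub>R axis i 1) $ c - f (z + t *\<^sub>R axis j 1) $ c
       - f (z + t *\<^sub>R axis i 1) $ c + f z $ c
     = t * t * (pd2 f i j (z + \<sigma>' *\<^sub>R axis j 1 + \<tau>' *\<^sub>R axis i 1) $ c)"
    using mixed_mvt[OF d1 d2 t] by blast
  have perm: "z + t *\<^sub>R axis j 1 + t *\<^sub>R axis i 1 = z + t *\<^sub>R axis i 1 + t *\<^sub>R axis j 1"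
    by (simp add: algebra_simps)
  have "t * t * (pd2 f j i (z + \<sigma> *\<^sub>R axis i 1 + \<tau> *\<^sub>R axis j 1) $ c)
      = t * t * (pd2 f i j (z + \<sigma>' *\<^sub>R axis j 1 + \<tau>' *\<^sub>R axis i 1) $ c)"
    using eq1 eq2 unfolding perm by linarith
  then have eq: "pd2 f j i (z + \<sigma> *\<^sub>R axis i 1 + \<tau> *\<^sub>R axis j 1) $ c
      = pd2 f i j (z + \<sigma>' *\<^sub>R axis j 1 + \<tau>' *\<^sub>R axis i 1) $ c" using t by simp
  have dz1: "dist (z + \<sigma> *\<^sub>R axis i 1 + \<tau> *\<^sub>R axis j 1) z < d2'"
    using norm_two_axis[OF st, of z i j] t_def d1' d2' by linarith
  have a1: "\<bar>pd2 f j i (z + \<sigma> *\<^sub>R axis i 1 + \<tau> *\<^sub>R axis j 1) $ c - pd2 f j i z $ c\<bar> < e/2"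
  proof -
    have "\<bar>(pd2 f j i (z + \<sigma> *\<^sub>R axis i 1 + \<tau> *\<^sub>R axis j 1) - pd2 f j i z) $ c\<bar> \<le> norm (pd2 f j i (z + \<sigma> *\<^sub>R axis i 1 + \<tau> *\<^sub>R axis j 1) - pd2 f j i z)" by (rule component_le_norm_cart)
    also have "\<dots> < e/2" using d2'(2)[OF dz1] by (simp add: dist_norm)
    finally show ?thesis by simp
  qed
  have dz2: "dist (z + \<sigma>' *\<^sub>R axis j 1 + \<tau>' *\<^sub>R axis i 1) z < d1'"
    using norm_two_axis[OF st', of z j i] t_def d1' d2' by linarith
  have a2: "\<bar>pd2 f i j (z + \<sigma>' *\<^sub>R axis j 1 + \<tau>' *\<^sub>R axis i 1) $ c - pd2 f i j z $ c\<bar> < e/2"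
  proof -
    have "\<bar>(pd2 f i j (z + \<sigma>' *\<^sub>R axis j 1 + \<tau>' *\<^sub>R axis i 1) - pd2 f i j z) $ c\<bar> \<le> norm (pd2 f i j (z + \<sigma>' *\<^sub>R axis j 1 + \<tau>' *\<^sub>R axis i 1) - pd2 f i j z)" by (rule component_le_norm_cart)
    also have "\<dots> < e/2" using d1'(2)[OF dz2] by (simp add: dist_norm)
    finally show ?thesis by simp
  qed
  show False using a1 a2 eq e_def by linarith
qed




lemma pd_at0:
  fixes g :: "real^'z::finite \<Rightarrow> real^'x::finite"
  assumes "\<forall>w. g differentiable (at w)"
  shows "((\<lambda>s. g (q + s *\<^sub>R axis i 1) $ c) has_real_derivative (pd g i q $ c)) (at 0)"
  using pd_line[OF assms, of q i c 0] by simp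

lemma axis_agree:
  assumes "i \<notin> S"
  shows "\<forall>l\<in>S. (z + s *\<^sub>R axis i 1) $ l = (z::real^'z::finite) $ l"
  using assms by (auto simp: axis_def)

lemma additive_pd_local:
  fixes f :: "real^'z::finite \<Rightarrow> real^'x::finite" and B :: "'k::finite \<Rightarrow> 'z set"
  assumes part: "slot_partition B" and d1: "\<forall>w. f differentiable (at w)"
    and add: "additive B f" and j: "j \<in> B k'"
    and agree: "\<forall>l\<in>B k'. z $ l = z' $ l"
  shows "pd f j z = pd f j z'"
proof -
  obtain g :: "'k \<Rightarrow> real^'z \<Rightarrow> real^'x" where
    gl: "\<And>k z z'. (\<forall>i\<in>B k. z $ i = z' $ i) \<Longrightarrow> g k z = g k z'" and
    fs: "\<And>z. f z = (\<Sum>k\<in>UNIV. g k z)"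
    using add unfolding additive_def by blast
  have diff: "f (w + s *\<^sub>R axis j 1) - f w = g k' (w + s *\<^sub>R axis j 1) - g k' w" for w s
  proof -
    have "\<And>k. k \<noteq> k' \<Longrightarrow> g k (w + s *\<^sub>R axis j 1) = g k w"
    proof -
      fix k assume "k \<noteq> k'"
      then have "j \<notin> B k" using part j unfolding slot_partition_def by blast
      then show "g k (w + s *\<^sub>R axis j 1) = g k w" by (intro gl axis_agree)
    qed
    then have "(\<Sum>k\<in>UNIV. g k (w + s *\<^sub>R axis j 1) - g k w)
         = (\<Sum>k\<in>UNIV. (if k = k' then g k' (w + s *\<^sub>R axis j 1) - g k' w else 0))"
      by (intro sum.cong) auto
    also have "\<dots> = g k' (w + s *\<^sub>R axis j 1) - g k' w" by simp
    finally have "(\<Sum>k\<in>UNIV. g k (w + s *\<^sub>R axis j 1)) - (\<Sum>k\<in>UNIV. g k w) = g k' (w + s *\<^sub>R axis j 1) - g k' w"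
      by (simp add: sum_subtractf)
    then show ?thesis using fs by simp
  qed
  have g2: "g k' (z + s *\<^sub>R axis j 1) = g k' (z' + s *\<^sub>R axis j 1)" for s
    using agree j by (intro gl) (auto simp: axis_def)
  have "pd f j z $ c = pd f j z' $ c" for c
  proof -
    have h1: "((\<lambda>s. f (z + s *\<^sub>R axis j 1) $ c) has_real_derivative (pd f j z $ c)) (at 0)"
      by (rule pd_at0[OF d1])
    have h2: "((\<lambda>s. f (z' + s *\<^sub>R axis j 1) $ c) has_real_derivative (pd f j z' $ c)) (at 0)"
      by (rule pd_at0[OF d1])
    have eqf: "(\<lambda>s. f (z + s *\<^sub>R axis j 1) $ c) = (\<lambda>s. f (z' + s *\<^sub>R axis j 1) $ c + (f z $ c - f z' $ c))"
    proof
      fix s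
      have "f (z + s *\<^sub>R axis j 1) - f z = f (z' + s *\<^sub>R axis j 1) - f z'"
        using diff[of z s] diff[of z' s] g2[of s] g2[of 0] by simp
      then have "(f (z + s *\<^sub>R axis j 1) - f z) $ c = (f (z' + s *\<^sub>R axis j 1) - f z') $ c" by simp
      then show "f (z + s *\<^sub>R axis j 1) $ c = f (z' + s *\<^sub>R axis j 1) $ c + (f z $ c - f z' $ c)"
        by simp
    qed
    have "((\<lambda>s. f (z + s *\<^sub>R axis j 1) $ c) has_real_derivative (pd f j z' $ c + 0)) (at 0)"
      unfolding eqf by (intro DERIV_add h2 DERIV_const)
    then show ?thesis using h1 DERIV_unique by force
  qed
  then show ?thesis by (simp add: vec_eq_iff)
qed

lemma additive_first_order:
  fixes f :: "real^'z::finite \<Rightarrow> real^'x::finite" and B :: "'k::finite \<Rightarrow> 'z set"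
  assumes part: "slot_partition B" and d1: "\<forall>w. f differentiable (at w)"
    and d2: "\<forall>k w. pd f k differentiable (at w)"
    and add: "additive B f"
  shows "first_order_across_slots B f"
  unfolding first_order_across_slots_def at_most_first_order_def
proof (intro allI impI ballI)
  fix k k' z i j assume kk: "k \<noteq> k'" and i: "i \<in> B k" and j: "j \<in> B k'"
  have ni: "i \<notin> B k'" using part kk i unfolding slot_partition_def by blast
  have d3: "\<forall>w. pd f j differentiable (at w)" using d2 by blast
  have "pd2 f i j z $ c = 0" for c
  proof -
    have h1: "((\<lambda>s. pd f j (z + s *\<^sub>R axis i 1) $ c) has_real_derivative (pd2 f i j z $ c)) (at 0)"
      unfolding pd2_def by (rule pd_at0[OF d3])
    have "(\<lambda>s. pd f j (z + s *\<^sub>R axis i 1) $ c) = (\<lambda>s. pd f j z $ c)"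
      using additive_pd_local[OF part d1 add j axis_agree[OF ni]] by simp
    then have "((\<lambda>s. pd f j (z + s *\<^sub>R axis i 1) $ c) has_real_derivative 0) (at 0)"
      by (simp add: DERIV_const)
    then show ?thesis using h1 DERIV_unique by blast
  qed
  then show "pd2 f i j z = 0" by (simp add: vec_eq_iff)
qed




lemma rank_full_indep:
  fixes W :: "'j \<Rightarrow> 'a::euclidean_space"
  assumes fin: "finite J" and r: "dim (span (W`J)) = card J"
  shows "inj_on W J \<and> independent (W`J)"
proof -
  have "dim (W`J) \<le> card (W`J)" using fin by (simp add: dim_le_card')
  moreover have "card (W`J) \<le> card J" using fin by (rule card_image_le)
  ultimately have c: "card (W`J) = card J" using r dim_span by (metis le_antisym)
  then have "inj_on W J" using fin eq_card_imp_inj_on by blast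
  moreover have "independent (W`J)"
    using card_eq_dim[of "W`J" "W`J"] c r fin by (simp add: dim_span span_superset)
  ultimately show ?thesis by blast
qed

lemma rank_sub:
  fixes W :: "'j \<Rightarrow> 'a::euclidean_space"
  assumes "inj_on W J" "independent (W`J)" "Y \<subseteq> J"
  shows "dim (span (W`Y)) = card Y"
proof -
  have "independent (W`Y)" using assms independent_mono by (metis image_mono)
  then have "dim (span (W`Y)) = card (W`Y)" by (rule dim_span_eq_card_independent)
  also have "\<dots> = card Y" using assms by (metis card_image inj_on_subset)
  finally show ?thesis .
qed

lemma suff_indep_at:
  fixes f :: "real^('z::{finite,linorder}) \<Rightarrow> real^'x::finite" and B :: "'k::finite \<Rightarrow> 'z set"
  assumes part: "slot_partition B"
    and sym: "\<And>i i'. pd2 f i i' z = pd2 f i' i z"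
    and rank: "col_rank (W_cols f z) (W_index B) = card (W_index B)"
  shows "col_rank (W_cols f z) (\<Union>k. Inl ` B k \<union> Inr ` (B k \<times> B k))
      = (\<Sum>k\<in>UNIV. col_rank (\<lambda>i. pd f i z) (B k)
                   + col_rank (\<lambda>(i, i'). pd2 f i i' z) (B k \<times> B k))"
proof -
  define W where "W = W_cols f z"
  define L where "L = (\<lambda>k. {(i, i'). i \<in> B k \<and> i' \<in> B k \<and> i' \<le> i})"
  define P where "P = (\<lambda>k. Inl ` B k \<union> Inr ` L k)"
  have J: "W_index B = (\<Union>k. P k)" unfolding W_index_def P_def L_def by simp
  have finJ: "finite (W_index B)" by simp
  obtain injW: "inj_on W (W_index B)" and indW: "independent (W ` W_index B)"
    using rank_full_indep[OF finJ] rank unfolding col_rank_def W_def by blast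
  have Ws: "W (Inr (i, i')) = W (Inr (i', i))" for i i' using sym by (simp add: W_def W_cols_def)
  have img: "W ` (\<Union>k. Inl ` B k \<union> Inr ` (B k \<times> B k)) = W ` W_index B"
  proof
    show "W ` W_index B \<subseteq> W ` (\<Union>k. Inl ` B k \<union> Inr ` (B k \<times> B k))"
      unfolding W_index_def by (intro image_mono) auto
  next
    show "W ` (\<Union>k. Inl ` B k \<union> Inr ` (B k \<times> B k)) \<subseteq> W ` W_index B"
    proof
      fix y assume "y \<in> W ` (\<Union>k. Inl ` B k \<union> Inr ` (B k \<times> B k))"
      then obtain k c where k: "c \<in> Inl ` B k \<union> Inr ` (B k \<times> B k)" and y: "y = W c" by blast
      show "y \<in> W ` W_index B"
      proof (cases c)
        case (Inl i) then show ?thesis using k y unfolding W_index_def by blast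
      next
        case (Inr p)
        then obtain i i' where p: "c = Inr (i, i')" "i \<in> B k" "i' \<in> B k" using k by (cases p) auto
        show ?thesis
        proof (cases "i' \<le> i")
          case True then show ?thesis using p y unfolding W_index_def by blast
        next
          case False
          then have "Inr (i', i) \<in> Inr ` {(a, b). a \<in> B k \<and> b \<in> B k \<and> b \<le> a}"
            using p(2,3) False by (intro imageI) simp
          then have "Inr (i', i) \<in> W_index B" unfolding W_index_def by (intro UN_I[of k]) auto
          moreover have "y = W (Inr (i', i))" using y p Ws by simp
          ultimately show ?thesis by blast
        qed
      qed
    qed
  qed
  have lhs: "col_rank W (\<Union>k. Inl ` B k \<union> Inr ` (B k \<times> B k)) = card (W_index B)"
    using rank img unfolding col_rank_def W_def by simp
  have d1: "col_rank (\<lambda>i. pd f i z) (B k) = card (Inl ` B k :: ('z + 'z \<times> 'z) set)" for k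
  proof -
    have "(\<lambda>i. pd f i z) ` B k = W ` (Inl ` B k)" by (auto simp: W_def W_cols_def image_image)
    moreover have "Inl ` B k \<subseteq> W_index B" unfolding W_index_def by blast
    ultimately show ?thesis unfolding col_rank_def using rank_sub[OF injW indW] by simp
  qed
  have d2: "col_rank (\<lambda>(i, i'). pd2 f i i' z) (B k \<times> B k) = card (Inr ` L k :: ('z + 'z \<times> 'z) set)" for k
  proof -
    have "(\<lambda>(i, i'). pd2 f i i' z) ` (B k \<times> B k) = W ` (Inr ` L k)"
    proof
      show "W ` (Inr ` L k) \<subseteq> (\<lambda>(i, i'). pd2 f i i' z) ` (B k \<times> B k)"
      proof
        fix y assume "y \<in> W ` (Inr ` L k)"
        then obtain p where p: "p \<in> L k" "y = W (Inr p)" by blast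
        obtain i i' where ii: "p = (i, i')" by (cases p)
        have q: "i \<in> B k" "i' \<in> B k" using p ii by (simp_all add: L_def)
        have "y = pd2 f i i' z" using p ii by (simp add: W_def W_cols_def)
        note q = q this
        show "y \<in> (\<lambda>(i, i'). pd2 f i i' z) ` (B k \<times> B k)"
          by (rule rev_image_eqI[of "(i,i')"]) (simp_all add: q)
      qed
    next
      show "(\<lambda>(i, i'). pd2 f i i' z) ` (B k \<times> B k) \<subseteq> W ` (Inr ` L k)"
      proof
        fix y assume "y \<in> (\<lambda>(i, i'). pd2 f i i' z) ` (B k \<times> B k)"
        then obtain pp where pp: "pp \<in> B k \<times> B k" "y = (\<lambda>(i, i'). pd2 f i i' z) pp" by (rule imageE)
        obtain i i' where ii: "pp = (i, i')" by (cases pp)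
        have p: "i \<in> B k" "i' \<in> B k" "y = pd2 f i i' z" using pp unfolding ii by simp_all
        show "y \<in> W ` (Inr ` L k)"
        proof (cases "i' \<le> i")
          case True
          then have "(i, i') \<in> L k" using p by (simp add: L_def)
          moreover have "y = W (Inr (i, i'))" using p by (simp add: W_def W_cols_def)
          ultimately show ?thesis by blast
        next
          case False
          then have "i \<le> i'" by (simp add: not_le less_imp_le)
          then have "(i', i) \<in> L k" using p by (simp add: L_def)
          moreover have "y = W (Inr (i', i))" using p(3) sym[of i i'] by (simp add: W_def W_cols_def)
          ultimately show ?thesis by blast
        qed
      qed
    qed
    moreover have "Inr ` L k \<subseteq> W_index B" unfolding W_index_def L_def by blast
    ultimately show ?thesis unfolding col_rank_def using rank_sub[OF injW indW] by simp
  qed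
  have disj: "P k \<inter> P k' = {}" if "k \<noteq> k'" for k k'
    using part that unfolding slot_partition_def P_def L_def by blast
  have "card (W_index B) = (\<Sum>k\<in>UNIV. card (P k))"
    unfolding J by (rule card_UN_disjoint) (simp_all add: disj)
  also have "\<dots> = (\<Sum>k\<in>UNIV. card (Inl ` B k :: ('z + 'z \<times> 'z) set) + card (Inr ` L k :: ('z + 'z \<times> 'z) set))"
    unfolding P_def by (intro sum.cong refl card_Un_disjoint) auto
  finally show ?thesis using lhs d1 d2 W_def by simp
qed




lemma col_expand:
  fixes N :: "real^'z::finite^'z"
  shows "N *v axis i 1 = (\<Sum>b\<in>UNIV. N$b$i *\<^sub>R axis b 1)"
  proof -
  have "(N *v axis i 1) $ a = (\<Sum>b\<in>UNIV. N$b$i *\<^sub>R axis b 1) $ a" for a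
  proof -
    have "(N *v axis i 1) $ a = N$a$i" by (simp add: matrix_vector_mult_basis column_def)
    moreover have "(\<Sum>b\<in>UNIV. N$b$i *\<^sub>R axis b (1::real)) $ a = (\<Sum>b\<in>UNIV. if b = a then N$b$i else 0)"
      unfolding sum_component by (intro sum.cong) (auto simp: axis_def)
    ultimately show ?thesis by simp
  qed
  then show ?thesis by (simp add: vec_eq_iff)
qed

lemma comp_lin:
  fixes g :: "real^'z::finite \<Rightarrow> real^'x::finite" and N :: "real^'z^'z"
  assumes d: "\<forall>w. g differentiable (at w)"
  shows "(\<lambda>w. g (N *v w)) differentiable (at w) \<and>
         pd (\<lambda>w. g (N *v w)) i w = (\<Sum>b\<in>UNIV. N$b$i *\<^sub>R pd g b (N *v w))"
proof -
  define D where "D = frechet_derivative g (at (N *v w))"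
  have gD: "(g has_derivative D) (at (N *v w))" using d frechet_derivative_works D_def by blast
  have lin: "linear D" using gD has_derivative_linear by blast
  have L: "((\<lambda>w. N *v w) has_derivative (\<lambda>h. N *v h)) (at w)"
    by (rule bounded_linear_imp_has_derivative[OF matrix_vector_mul_bounded_linear])
  have c: "((\<lambda>w. g (N *v w)) has_derivative (\<lambda>h. D (N *v h))) (at w)"
    using has_derivative_compose[OF L gD] by simp
  have e: "(\<lambda>h. D (N *v h)) = frechet_derivative (\<lambda>w. g (N *v w)) (at w)"
    by (rule frechet_derivative_at[OF c])
  have "pd (\<lambda>w. g (N *v w)) i w = D (N *v axis i 1)"
    unfolding pd_def e[symmetric] by simp
  also have "\<dots> = (\<Sum>b\<in>UNIV. N$b$i *\<^sub>R D (axis b 1))"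
    unfolding col_expand using lin by (simp add: linear_sum linear_scale)
  also have "\<dots> = (\<Sum>b\<in>UNIV. N$b$i *\<^sub>R pd g b (N *v w))" by (simp add: pd_def D_def)
  moreover have "(\<lambda>w. g (N *v w)) differentiable (at w)" using c by (rule differentiableI)
  ultimately show ?thesis by simp
qed

lemma comb_pd:
  fixes G :: "'a \<Rightarrow> real^'z::finite \<Rightarrow> real^'x::finite" and A :: "'a set"
  assumes fin: "finite A" and d: "\<forall>a w. G a differentiable (at w)"
  shows "(\<lambda>w. \<Sum>a\<in>A. c a *\<^sub>R G a w) differentiable (at w) \<and>
         pd (\<lambda>w. \<Sum>a\<in>A. c a *\<^sub>R G a w) i w = (\<Sum>a\<in>A. c a *\<^sub>R pd (G a) i w)"
proof -
  have h: "\<And>a. (G a has_derivative frechet_derivative (G a) (at w)) (at w)"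
    using d frechet_derivative_works by blast
  have c: "((\<lambda>w. \<Sum>a\<in>A. c a *\<^sub>R G a w) has_derivative (\<lambda>h. \<Sum>a\<in>A. c a *\<^sub>R frechet_derivative (G a) (at w) h)) (at w)"
    by (intro has_derivative_sum has_derivative_scaleR_right h)
  have e: "(\<lambda>h. \<Sum>a\<in>A. c a *\<^sub>R frechet_derivative (G a) (at w) h) = frechet_derivative (\<lambda>w. \<Sum>a\<in>A. c a *\<^sub>R G a w) (at w)"
    by (rule frechet_derivative_at[OF c])
  have "pd (\<lambda>w. \<Sum>a\<in>A. c a *\<^sub>R G a w) i w = (\<Sum>a\<in>A. c a *\<^sub>R frechet_derivative (G a) (at w) (axis i 1))"
    unfolding pd_def e[symmetric] by simp
  moreover have "(\<lambda>w. \<Sum>a\<in>A. c a *\<^sub>R G a w) differentiable (at w)" using c by (rule differentiableI)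
  ultimately show ?thesis by (simp add: pd_def)
qed




lemma fb_pd2:
  fixes f :: "real^'z::finite \<Rightarrow> real^'x::finite" and N :: "real^'z^'z"
  assumes d1: "\<forall>w. f differentiable (at w)" and d2: "\<forall>k w. pd f k differentiable (at w)"
    and fbN: "\<forall>w. fb w = f (N *v w)"
  shows "pd2 fb i j w = (\<Sum>a\<in>UNIV. N$a$j *\<^sub>R (\<Sum>b\<in>UNIV. N$b$i *\<^sub>R pd2 f b a (N *v w)))"
proof -
  have fbe: "fb = (\<lambda>w. f (N *v w))" using fbN by auto
  have pj: "pd fb j = (\<lambda>w. \<Sum>a\<in>UNIV. N$a$j *\<^sub>R pd f a (N *v w))"
    unfolding fbe using comp_lin[OF d1] by blast
  define G where "G = (\<lambda>a w. pd f a (N *v w))"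
  have dG: "\<forall>a w. G a differentiable (at w)"
  proof (intro allI)
    fix a w
    have "\<forall>w. pd f a differentiable (at w)" using d2 by blast
    then show "G a differentiable (at w)" unfolding G_def using comp_lin by blast
  qed
  have "pd2 fb i j w = pd (\<lambda>w. \<Sum>a\<in>UNIV. N$a$j *\<^sub>R G a w) i w"
    unfolding pd2_def pj G_def by simp
  also have "\<dots> = (\<Sum>a\<in>UNIV. N$a$j *\<^sub>R pd (G a) i w)"
    using comb_pd[where A=UNIV and G=G and c="\<lambda>a. N$a$j" and w=w and i=i] dG by simp
  also have "\<dots> = (\<Sum>a\<in>UNIV. N$a$j *\<^sub>R (\<Sum>b\<in>UNIV. N$b$i *\<^sub>R pd2 f b a (N *v w)))"
  proof (intro sum.cong refl)
    fix a
    have "\<forall>w. pd f a differentiable (at w)" using d2 by blast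
    then have "pd (G a) i w = (\<Sum>b\<in>UNIV. N$b$i *\<^sub>R pd2 f b a (N *v w))"
      unfolding G_def pd2_def using comp_lin by blast
    then show "N$a$j *\<^sub>R pd (G a) i w = N$a$j *\<^sub>R (\<Sum>b\<in>UNIV. N$b$i *\<^sub>R pd2 f b a (N *v w))"
      by simp
  qed
  finally show ?thesis .
qed

lemma part_unique:
  assumes "slot_partition B" "i \<in> B k" "i \<in> B k'"
  shows "k = k'"
  using assms unfolding slot_partition_def by blast

lemma part_ex:
  assumes "slot_partition B"
  obtains k where "i \<in> B k"
  using assms unfolding slot_partition_def by blast

lemma block_zero:
  assumes "block_diag B M" "slot_partition B" "i \<in> B k" "j \<notin> B k"
  shows "M $ i $ j = 0"
proof -
  have "\<not> (\<exists>k'. i \<in> B k' \<and> j \<in> B k')" using part_unique[OF assms(2)] assms(3,4) by blast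
  then show ?thesis using assms(1) unfolding block_diag_def by blast
qed

lemma inv_block:
  fixes M N :: "real^'z::finite^'z" and B :: "'k::finite \<Rightarrow> 'z set"
  assumes part: "slot_partition B" and bd: "block_diag B M"
    and MN: "M ** N = mat 1" and NM: "N ** M = mat 1"
    and j: "j \<in> B k" and a: "a \<notin> B k"
  shows "N $ a $ j = 0"
proof -
  obtain k'' where a'': "a \<in> B k''" using part_ex[OF part] by blast
  define S where "S = B k''"
  define u where "u = (\<chi> d. if d \<in> S then N $ d $ j else (0::real))"
  have Mu: "M *v u = 0"
  proof -
    have "(M *v u) $ c = 0" for c
    proof -
      have e: "(M *v u) $ c = (\<Sum>d\<in>UNIV. if d \<in> S then M$c$d * N$d$j else 0)"
        by (simp add: matrix_vector_mult_def u_def if_distrib cong: if_cong)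
      show ?thesis
      proof (cases "c \<in> S")
        case True
        have "(\<Sum>d\<in>UNIV. if d \<in> S then M$c$d * N$d$j else 0) = (\<Sum>d\<in>UNIV. M$c$d * N$d$j)"
        proof (intro sum.cong refl)
          fix d show "(if d \<in> S then M$c$d * N$d$j else 0) = M$c$d * N$d$j"
            using block_zero[OF bd part True[unfolded S_def], of d] S_def by auto
        qed
        also have "\<dots> = (M ** N) $ c $ j" by (simp add: matrix_matrix_mult_def)
        also have "\<dots> = 0"
        proof -
          have "c \<noteq> j" using True j a'' part_unique[OF part] S_def a by blast
          then show ?thesis using MN by (simp add: mat_def)
        qed
        finally show ?thesis using e by simp
      next
        case False
        have "(\<Sum>d\<in>UNIV. if d \<in> S then M$c$d * N$d$j else 0) = 0"
        proof (intro sum.neutral ballI)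
          fix d
          show "(if d \<in> S then M$c$d * N$d$j else 0) = 0"
          proof (cases "d \<in> S")
            case True
            then have "M$c$d = 0" using bd False unfolding block_diag_def S_def
              using part_unique[OF part] by blast
            then show ?thesis by simp
          qed simp
        qed
        then show ?thesis using e by simp
      qed
    qed
    then show ?thesis by (simp add: vec_eq_iff)
  qed
  have "u = N *v (M *v u)" by (simp add: matrix_vector_mul_assoc NM)
  then have "u = 0" using Mu by simp
  then have "u $ a = 0" by simp
  then show ?thesis using a'' S_def u_def by simp
qed




lemma sum_ident:
  fixes x y g h :: "'a \<Rightarrow> real"
  shows "(\<Sum>a\<in>A. x a * (\<Sum>b\<in>A. y b * (g b * h a + g a * h b)))
       = (\<Sum>a\<in>A. x a * h a) * (\<Sum>b\<in>A. y b * g b) + (\<Sum>a\<in>A. x a * g a) * (\<Sum>b\<in>A. y b * h b)"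
proof -
  have "(\<Sum>a\<in>A. x a * (\<Sum>b\<in>A. y b * (g b * h a + g a * h b)))
      = (\<Sum>a\<in>A. \<Sum>b\<in>A. (x a * h a) * (y b * g b) + (x a * g a) * (y b * h b))"
    by (simp add: sum_distrib_left algebra_simps)
  also have "\<dots> = (\<Sum>a\<in>A. \<Sum>b\<in>A. (x a * h a) * (y b * g b)) + (\<Sum>a\<in>A. \<Sum>b\<in>A. (x a * g a) * (y b * h b))"
    by (simp add: sum.distrib)
  also have "\<dots> = (\<Sum>a\<in>A. x a * h a) * (\<Sum>b\<in>A. y b * g b) + (\<Sum>a\<in>A. x a * g a) * (\<Sum>b\<in>A. y b * h b)"
    by (simp add: sum_product)
  finally show ?thesis .
qed

lemma MN_entry:
  fixes M N :: "real^'z::finite^'z"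
  assumes "M ** N = mat 1"
  shows "(\<Sum>b\<in>UNIV. N$b$i * M$p$b) = (if p = i then 1 else 0)"
proof -
  have "(\<Sum>b\<in>UNIV. N$b$i * M$p$b) = (M ** N) $ p $ i"
    by (simp add: matrix_matrix_mult_def mult.commute)
  then show ?thesis using assms by (simp add: mat_def)
qed


lemma ia_nonzero:
  fixes f :: "real^('z::{finite,linorder}) \<Rightarrow> real^'x::finite" and B :: "'k::finite \<Rightarrow> 'z set"
  assumes part: "slot_partition B"
    and d1: "\<forall>w. f differentiable (at w)" and d2: "\<forall>k w. pd f k differentiable (at w)"
    and cont: "\<forall>i j. continuous_on UNIV (pd2 f i j)"
    and fo: "first_order_across_slots B f" and sn: "suff_nonlinear B f"
    and bd: "block_diag B M" and MN: "M ** N = mat 1"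
    and fbN: "\<forall>w. fb w = f (N *v w)"
    and i: "i \<in> B k" and j: "j \<in> B k"
  shows "pd2 fb i j z \<noteq> 0"
proof
  assume z0: "pd2 fb i j z = 0"
  define w where "w = N *v z"
  define W where "W = W_cols f w"
  define J where "J = W_index B"
  have finJ: "finite J" by (simp add: J_def)
  have r: "dim (span (W ` J)) = card J"
    using sn unfolding suff_nonlinear_def col_rank_def W_def J_def by (rule spec)
  have "inj_on W J \<and> independent (W ` J)" by (rule rank_full_indep[OF finJ r])
  then have injW: "inj_on W J" and indW: "independent (W ` J)" by simp_all
  define g where "g = (\<lambda>b. M$i$b)"
  define h where "h = (\<lambda>a. M$j$a)"
  define val where "val = (\<lambda>c::'z + 'z \<times> 'z. case c of Inl _ \<Rightarrow> 0 | Inr (b, a) \<Rightarrow> g b * h a + g a * h b)"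
  obtain \<phi> :: "real^'x \<Rightarrow> real" where lin: "linear \<phi>" and phv: "\<forall>v\<in>W`J. \<phi> v = val (inv_into J W v)"
    using linear_independent_extend[OF indW, of "\<lambda>v. val (inv_into J W v)"] by blast
  have phW: "\<phi> (W c) = val c" if "c \<in> J" for c
  proof -
    have "W c \<in> W ` J" using that by (rule imageI)
    then have "\<phi> (W c) = val (inv_into J W (W c))" using phv by blast
    then show ?thesis using inv_into_f_f[OF injW that] by simp
  qed
  have key: "\<phi> (pd2 f b a w) = g b * h a + g a * h b" for a b
  proof -
    obtain kb where kb: "b \<in> B kb" using part_ex[OF part] by blast
    obtain ka where ka: "a \<in> B ka" using part_ex[OF part] by blast
    show ?thesis
    proof (cases "ka = kb")
      case True
      show ?thesis
      proof (cases "a \<le> b")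
        case True
        have "Inr (b, a) \<in> J" unfolding J_def W_index_def
          using kb ka \<open>ka = kb\<close> True by (intro UN_I[of kb]) auto
        moreover have "W (Inr (b, a)) = pd2 f b a w" by (simp add: W_def W_cols_def)
        ultimately show ?thesis using phW[of "Inr (b, a)"] by (simp add: val_def)
      next
        case False
        then have "b \<le> a" by (simp add: not_le less_imp_le)
        have "Inr (a, b) \<in> J" unfolding J_def W_index_def
          using kb ka \<open>ka = kb\<close> \<open>b \<le> a\<close> by (intro UN_I[of kb]) auto
        moreover have "W (Inr (a, b)) = pd2 f b a w"
          using schwarz[OF d1 d2] cont by (simp add: W_def W_cols_def)
        ultimately show ?thesis using phW[of "Inr (a, b)"] by (simp add: val_def algebra_simps)
      qed
    next
      case False
      have "pd2 f b a w = 0" using fo kb ka False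
        unfolding first_order_across_slots_def at_most_first_order_def by metis
      then have l: "\<phi> (pd2 f b a w) = 0" using lin by (simp add: linear_0)
      have "g b * h a + g a * h b = 0"
      proof (cases "b \<in> B k")
        case True
        then have "kb = k" using part_unique[OF part kb] by simp
        then have "a \<notin> B k" using part_unique[OF part ka] False by auto
        then show ?thesis using block_zero[OF bd part i] block_zero[OF bd part j]
          by (simp add: g_def h_def)
      next
        case False
        then show ?thesis using block_zero[OF bd part i] block_zero[OF bd part j]
          by (simp add: g_def h_def)
      qed
      then show ?thesis using l by simp
    qed
  qed
  have "\<phi> (pd2 fb i j z) = (\<Sum>a\<in>UNIV. N$a$j * (\<Sum>b\<in>UNIV. N$b$i * \<phi> (pd2 f b a w)))"
    unfolding fb_pd2[OF d1 d2 fbN] w_def using lin by (simp add: linear_sum linear_scale sum_distrib_left mult.assoc)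
  also have "\<dots> = (\<Sum>a\<in>UNIV. N$a$j * (\<Sum>b\<in>UNIV. N$b$i * (g b * h a + g a * h b)))"
    by (simp add: key)
  also have "\<dots> = (\<Sum>a\<in>UNIV. N$a$j * h a) * (\<Sum>b\<in>UNIV. N$b$i * g b) + (\<Sum>a\<in>UNIV. N$a$j * g a) * (\<Sum>b\<in>UNIV. N$b$i * h b)"
    by (rule sum_ident)
  also have "\<dots> = 1 + (if i = j then 1 else 0) * (if j = i then 1 else 0)"
    unfolding g_def h_def using MN_entry[OF MN] by simp
  finally have "\<phi> (pd2 fb i j z) \<noteq> 0" by simp
  then show False using z0 lin by (simp add: linear_0)
qed




lemma fb_first_order:
  fixes f :: "real^('z::{finite,linorder}) \<Rightarrow> real^'x::finite" and B :: "'k::finite \<Rightarrow> 'z set"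
  assumes part: "slot_partition B"
    and d1: "\<forall>w. f differentiable (at w)" and d2: "\<forall>k w. pd f k differentiable (at w)"
    and fo: "first_order_across_slots B f"
    and bd: "block_diag B M" and MN: "M ** N = mat 1" and NM: "N ** M = mat 1"
    and fbN: "\<forall>w. fb w = f (N *v w)"
  shows "first_order_across_slots B fb"
  unfolding first_order_across_slots_def at_most_first_order_def
proof (intro allI impI ballI)
  fix k k' z i j assume kk: "k \<noteq> k'" and i: "i \<in> B k" and j: "j \<in> B k'"
  have hz: "N$a$j * (N$b$i * pd2 f b a (N *v z) $ c) = 0" for a b c
  proof (cases "a \<in> B k'")
    case False then show ?thesis using inv_block[OF part bd MN NM j] by simp
  next
    case True
    show ?thesis
    proof (cases "b \<in> B k")
      case False then show ?thesis using inv_block[OF part bd MN NM i] by simp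
    next
      case True
      have "pd2 f b a (N *v z) = 0" using fo True \<open>a \<in> B k'\<close> kk
        unfolding first_order_across_slots_def at_most_first_order_def by blast
      then show ?thesis by simp
    qed
  qed
  then have "pd2 fb i j z $ c = 0" for c
    unfolding fb_pd2[OF d1 d2 fbN] by (simp add: sum_component sum_distrib_left hz)
  then show "pd2 fb i j z = 0" by (simp add: vec_eq_iff)
qed

theorem mainTheorem10:
  fixes f :: "real^('z::{finite,linorder}) \<Rightarrow> real^'x::finite"
    and B :: "'k::finite \<Rightarrow> 'z set"
  assumes "slot_partition B"
    and "C2_diffeo f"
    and "additive B f"
    and "suff_nonlinear B f"
  shows "first_order_across_slots B f
    \<and> suff_independent B f
    \<and> (\<forall>(fb :: real^('z::{finite,linorder}) \<Rightarrow> real^'x) (M :: real^('z::{finite,linorder})^('z::{finite,linorder})).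
          block_diag B M \<and> invertible M \<and> (\<forall>z. fb (M *v z) = f z)
          \<longrightarrow> interaction_asym B fb)"
proof -
  note part = assms(1)
  have C: "C2 f" using assms(2) unfolding C2_diffeo_def by blast
  have d1: "\<forall>w. f differentiable (at w)" using C unfolding C2_def by blast
  have d2: "\<forall>k w. pd f k differentiable (at w)" using C unfolding C2_def by blast
  have cont: "\<forall>i j. continuous_on UNIV (pd2 f i j)" using C unfolding C2_def by blast
  have sym: "pd2 f i j z = pd2 f j i z" for i j z
    using schwarz[OF d1 d2] cont by blast
  have fo: "first_order_across_slots B f"
    by (rule additive_first_order[OF part d1 d2 assms(3)])
  have si: "suff_independent B f"
    unfolding suff_independent_def
  proof
    fix z
    have r: "col_rank (W_cols f z) (W_index B) = card (W_index B)"
      using assms(4) unfolding suff_nonlinear_def by (rule spec)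
    show "col_rank (W_cols f z) (\<Union>k. Inl ` B k \<union> Inr ` (B k \<times> B k))
      = (\<Sum>k\<in>UNIV. col_rank (\<lambda>i. pd f i z) (B k)
                   + col_rank (\<lambda>(i, i'). pd2 f i i' z) (B k \<times> B k))"
      by (rule suff_indep_at[OF part sym r])
  qed
  have ia: "interaction_asym B fb"
    if h: "block_diag B M \<and> invertible M \<and> (\<forall>z. fb (M *v z) = f z)" for fb M
  proof -
    have bd: "block_diag B M" using h by blast
    obtain N where MN: "M ** N = mat 1" and NM: "N ** M = mat 1"
      using h unfolding invertible_def by blast
    have fbN: "\<forall>w. fb w = f (N *v w)"
    proof
      fix w
      have "fb (M *v (N *v w)) = f (N *v w)" using h by blast
      moreover have "M *v (N *v w) = w" by (simp add: matrix_vector_mul_assoc MN)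
      ultimately show "fb w = f (N *v w)" by simp
    qed
    have fob: "first_order_across_slots B fb"
      by (rule fb_first_order[OF part d1 d2 fo bd MN NM fbN])
    have "second_order_at fb A B' z" if ne: "A \<noteq> {}" "B' \<noteq> {}" "A \<union> B' = B k" for z k A B'
    proof -
      obtain i where i: "i \<in> A" using ne(1) by blast
      obtain j where j: "j \<in> B'" using ne(2) by blast
      have "i \<in> B k" "j \<in> B k" using i j ne(3) by blast+
      then have "pd2 fb i j z \<noteq> 0"
        by (rule ia_nonzero[OF part d1 d2 cont fo assms(4) bd MN fbN])
      then show ?thesis unfolding second_order_at_def using i j by blast
    qed
    then show ?thesis unfolding interaction_asym_def using fob by blast
  qed
  show ?thesis using fo si ia by blast
qed



end
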